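(* Let $M$ be a nearly finitary matroid that is not $k$-nearly finitary for any $k\in\mathbb{N}$, and let $N$ be a nearly finitary matroid whose ground set $E(N)$ is disjoint from $E(M)$. Then $M\vee N$ is a nearly finitary matroid that is not $k$-nearly finitary for any $k\in\mathbb{N}$.
   Context: Matroids (possibly infinite): $\emptyset$ independent; subsets of independent sets independent; if $B$ is maximal independent and $A$ non-maximal independent, then $A\cup\{b\}$ is independent for some $b\in B\setminus A$; for independent $A\subseteq X\subseteq E$ there is a maximal independent $S$ with $A\subseteq S\subseteq X$. Bases are maximal independent sets. The union $M\vee N$ has ground set $E(M)\cup E(N)$ and independent sets $\{S\cup T: S\text{ independent in }M,\ T\text{ independent in }N\}$. The finitarization $M^{\mathrm{fin}}$ has as independent sets those sets all of whose finite subsets are independent in $M$. $M$ is nearly finitary if $F\setminus B$ is finite whenever a base $F$ of $M^{\mathrm{fin}}$ contains a base $B$ of $M$; $k$-nearly finitary if $|F\setminus B|\le k$ for all such pairs. *)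

theory Defs
  imports Main
begin

record 'a matroid =
  gnd :: "'a set"
  indep :: "'a set set"

definition maximal_in :: "'a set set \<Rightarrow> 'a set \<Rightarrow> bool" where
  "maximal_in F S \<longleftrightarrow> S \<in> F \<and> (\<forall>T\<in>F. S \<subseteq> T \<longrightarrow> T = S)"

definition base :: "'a matroid \<Rightarrow> 'a set \<Rightarrow> bool" where
  "base M B \<longleftrightarrow> maximal_in (indep M) B"

definition is_matroid :: "'a matroid \<Rightarrow> bool" where
  "is_matroid M \<longleftrightarrow>
     (\<forall>A\<in>indep M. A \<subseteq> gnd M) \<and>
     {} \<in> indep M \<and>
     (\<forall>A B. B \<in> indep M \<longrightarrow> A \<subseteq> B \<longrightarrow> A \<in> indep M) \<and>
     (\<forall>A B. base M B \<longrightarrow> A \<in> indep M \<longrightarrow> \<not> base M A \<longrightarrow>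
        (\<exists>b\<in>B - A. insert b A \<in> indep M)) \<and>
     (\<forall>A X. A \<in> indep M \<longrightarrow> A \<subseteq> X \<longrightarrow> X \<subseteq> gnd M \<longrightarrow>
        (\<exists>S. maximal_in {S'. S' \<in> indep M \<and> A \<subseteq> S' \<and> S' \<subseteq> X} S))"

definition matroid_union :: "'a matroid \<Rightarrow> 'a matroid \<Rightarrow> 'a matroid" where
  "matroid_union M N =
     \<lparr> gnd = gnd M \<union> gnd N,
       indep = {S \<union> T | S T. S \<in> indep M \<and> T \<in> indep N} \<rparr>"

definition finitarization :: "'a matroid \<Rightarrow> 'a matroid" where
  "finitarization M =
     \<lparr> gnd = gnd M,
       indep = {I. I \<subseteq> gnd M \<and> (\<forall>J. J \<subseteq> I \<longrightarrow> finite J \<longrightarrow> J \<in> indep M)} \<rparr>"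

definition nearly_finitary :: "'a matroid \<Rightarrow> bool" where
  "nearly_finitary M \<longleftrightarrow>
     (\<forall>F B. base (finitarization M) F \<longrightarrow> base M B \<longrightarrow> B \<subseteq> F \<longrightarrow> finite (F - B))"

definition k_nearly_finitary :: "nat \<Rightarrow> 'a matroid \<Rightarrow> bool" where
  "k_nearly_finitary k M \<longleftrightarrow>
     (\<forall>F B. base (finitarization M) F \<longrightarrow> base M B \<longrightarrow> B \<subseteq> F \<longrightarrow>
        finite (F - B) \<and> card (F - B) \<le> k)"

end

theory Submission
  imports Defs
begin

lemma max_sum:
  assumes d: "E1 \<inter> E2 = {}" and p: "\<forall>I\<in>P. I \<subseteq> E1" and q: "\<forall>I\<in>Q. I \<subseteq> E2"
    and r: "R = {I. I \<subseteq> E1 \<union> E2 \<and> I \<inter> E1 \<in> P \<and> I \<inter> E2 \<in> Q}"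
  shows "maximal_in R B \<longleftrightarrow> B \<subseteq> E1 \<union> E2 \<and> maximal_in P (B \<inter> E1) \<and> maximal_in Q (B \<inter> E2)"
proof
  assume m: "maximal_in R B"
  hence B: "B \<subseteq> E1 \<union> E2" "B \<inter> E1 \<in> P" "B \<inter> E2 \<in> Q" using r unfolding maximal_in_def by auto
  have "maximal_in P (B \<inter> E1)" unfolding maximal_in_def
  proof (intro conjI ballI impI)
    fix T assume T: "T \<in> P" "B \<inter> E1 \<subseteq> T"
    have TE: "T \<subseteq> E1" using p T by auto
    have "(T \<union> (B \<inter> E2)) \<inter> E1 = T" "(T \<union> (B \<inter> E2)) \<inter> E2 = B \<inter> E2" using TE d by auto
    hence "T \<union> (B \<inter> E2) \<in> R" using r T B TE by auto
    moreover have "B \<subseteq> T \<union> (B \<inter> E2)" using B T by auto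
    ultimately have "T \<union> (B \<inter> E2) = B" using m unfolding maximal_in_def by blast
    thus "T = B \<inter> E1" using TE d by auto
  qed (use B in auto)
  moreover have "maximal_in Q (B \<inter> E2)" unfolding maximal_in_def
  proof (intro conjI ballI impI)
    fix T assume T: "T \<in> Q" "B \<inter> E2 \<subseteq> T"
    have TE: "T \<subseteq> E2" using q T by auto
    have "(T \<union> (B \<inter> E1)) \<inter> E2 = T" "(T \<union> (B \<inter> E1)) \<inter> E1 = B \<inter> E1" using TE d by auto
    hence "T \<union> (B \<inter> E1) \<in> R" using r T B TE by auto
    moreover have "B \<subseteq> T \<union> (B \<inter> E1)" using B T by auto
    ultimately have "T \<union> (B \<inter> E1) = B" using m unfolding maximal_in_def by blast
    thus "T = B \<inter> E2" using TE d by auto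
  qed (use B in auto)
  ultimately show "B \<subseteq> E1 \<union> E2 \<and> maximal_in P (B \<inter> E1) \<and> maximal_in Q (B \<inter> E2)" using B by auto
next
  assume a: "B \<subseteq> E1 \<union> E2 \<and> maximal_in P (B \<inter> E1) \<and> maximal_in Q (B \<inter> E2)"
  hence aB: "B \<subseteq> E1 \<union> E2" and a1: "maximal_in P (B \<inter> E1)" and a2: "maximal_in Q (B \<inter> E2)" by auto
  show "maximal_in R B" unfolding maximal_in_def
  proof (intro conjI ballI impI)
    show "B \<in> R" using aB a1 a2 r unfolding maximal_in_def by simp
    fix T assume T: "T \<in> R" "B \<subseteq> T"
    have T1: "T \<inter> E1 \<in> P" and T2: "T \<inter> E2 \<in> Q" and TE: "T \<subseteq> E1 \<union> E2" using T(1) r by auto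
    have "B \<inter> E1 \<subseteq> T \<inter> E1" "B \<inter> E2 \<subseteq> T \<inter> E2" using T(2) by auto
    hence e1: "T \<inter> E1 = B \<inter> E1" and e2: "T \<inter> E2 = B \<inter> E2"
      using a1 a2 T1 T2 unfolding maximal_in_def by auto
    have "T = (T \<inter> E1) \<union> (T \<inter> E2)" using TE by auto
    also have "\<dots> = (B \<inter> E1) \<union> (B \<inter> E2)" using e1 e2 by simp
    also have "\<dots> = B" using aB by auto
    finally show "T = B" .
  qed
qed

lemma indep_U:
  assumes "is_matroid M" "is_matroid N" "gnd M \<inter> gnd N = {}"
  shows "indep (matroid_union M N) = {I. I \<subseteq> gnd M \<union> gnd N \<and> I \<inter> gnd M \<in> indep M \<and> I \<inter> gnd N \<in> indep N}"
proof
  have sM: "\<forall>A\<in>indep M. A \<subseteq> gnd M" and sN: "\<forall>A\<in>indep N. A \<subseteq> gnd N"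
    using assms unfolding is_matroid_def by auto
  show "indep (matroid_union M N) \<subseteq> {I. I \<subseteq> gnd M \<union> gnd N \<and> I \<inter> gnd M \<in> indep M \<and> I \<inter> gnd N \<in> indep N}"
  proof
    fix I assume "I \<in> indep (matroid_union M N)"
    then obtain S T where I: "I = S \<union> T" "S \<in> indep M" "T \<in> indep N" unfolding matroid_union_def by auto
    have "S \<subseteq> gnd M" "T \<subseteq> gnd N" using I sM sN by auto
    hence "I \<inter> gnd M = S" "I \<inter> gnd N = T" using I assms(3) by auto
    thus "I \<in> {I. I \<subseteq> gnd M \<union> gnd N \<and> I \<inter> gnd M \<in> indep M \<and> I \<inter> gnd N \<in> indep N}"
      using I \<open>S \<subseteq> gnd M\<close> \<open>T \<subseteq> gnd N\<close> by auto
  qed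
  show "{I. I \<subseteq> gnd M \<union> gnd N \<and> I \<inter> gnd M \<in> indep M \<and> I \<inter> gnd N \<in> indep N} \<subseteq> indep (matroid_union M N)"
  proof
    fix I assume I: "I \<in> {I. I \<subseteq> gnd M \<union> gnd N \<and> I \<inter> gnd M \<in> indep M \<and> I \<inter> gnd N \<in> indep N}"
    hence "I = (I \<inter> gnd M) \<union> (I \<inter> gnd N)" by auto
    thus "I \<in> indep (matroid_union M N)" using I unfolding matroid_union_def by auto
  qed
qed

lemma fin_mem: "I \<in> indep (finitarization M) \<longleftrightarrow> I \<subseteq> gnd M \<and> (\<forall>J. J \<subseteq> I \<longrightarrow> finite J \<longrightarrow> J \<in> indep M)"
  by (simp add: finitarization_def)

lemma fin_U:
  assumes "is_matroid M" "is_matroid N" "gnd M \<inter> gnd N = {}"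
  shows "indep (finitarization (matroid_union M N)) = {I. I \<subseteq> gnd M \<union> gnd N \<and>
     I \<inter> gnd M \<in> indep (finitarization M) \<and> I \<inter> gnd N \<in> indep (finitarization N)}"
proof -
  have iu: "\<And>I. I \<in> indep (matroid_union M N) \<longleftrightarrow> I \<subseteq> gnd M \<union> gnd N \<and> I \<inter> gnd M \<in> indep M \<and> I \<inter> gnd N \<in> indep N"
    using indep_U[OF assms] by blast
  have g: "gnd (matroid_union M N) = gnd M \<union> gnd N" unfolding matroid_union_def by simp
  show ?thesis
  proof (intro set_eqI iffI)
    fix I assume "I \<in> indep (finitarization (matroid_union M N))"
    hence I1: "I \<subseteq> gnd M \<union> gnd N" and I2: "\<forall>J. J \<subseteq> I \<longrightarrow> finite J \<longrightarrow> J \<in> indep (matroid_union M N)"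
      unfolding fin_mem g by auto
    have "\<forall>J. J \<subseteq> I \<inter> gnd M \<longrightarrow> finite J \<longrightarrow> J \<in> indep M"
    proof (intro allI impI)
      fix J assume J: "J \<subseteq> I \<inter> gnd M" "finite J"
      hence "J \<in> indep (matroid_union M N)" using I2 by blast
      hence "J \<inter> gnd M \<in> indep M" using iu by blast
      moreover have "J \<inter> gnd M = J" using J by blast
      ultimately show "J \<in> indep M" by simp
    qed
    moreover have "\<forall>J. J \<subseteq> I \<inter> gnd N \<longrightarrow> finite J \<longrightarrow> J \<in> indep N"
    proof (intro allI impI)
      fix J assume J: "J \<subseteq> I \<inter> gnd N" "finite J"
      hence "J \<in> indep (matroid_union M N)" using I2 by blast
      hence "J \<inter> gnd N \<in> indep N" using iu by blast
      moreover have "J \<inter> gnd N = J" using J by blast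
      ultimately show "J \<in> indep N" by simp
    qed
    ultimately have "I \<inter> gnd M \<in> indep (finitarization M)" "I \<inter> gnd N \<in> indep (finitarization N)"
      unfolding fin_mem by blast+
    thus "I \<in> {I. I \<subseteq> gnd M \<union> gnd N \<and>
     I \<inter> gnd M \<in> indep (finitarization M) \<and> I \<inter> gnd N \<in> indep (finitarization N)}"
      using I1 by blast
  next
    fix I assume "I \<in> {I. I \<subseteq> gnd M \<union> gnd N \<and>
     I \<inter> gnd M \<in> indep (finitarization M) \<and> I \<inter> gnd N \<in> indep (finitarization N)}"
    hence I1: "I \<subseteq> gnd M \<union> gnd N" and IM: "\<forall>J. J \<subseteq> I \<inter> gnd M \<longrightarrow> finite J \<longrightarrow> J \<in> indep M"
      and IN: "\<forall>J. J \<subseteq> I \<inter> gnd N \<longrightarrow> finite J \<longrightarrow> J \<in> indep N"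
      unfolding fin_mem by blast+
    have "\<forall>J. J \<subseteq> I \<longrightarrow> finite J \<longrightarrow> J \<in> indep (matroid_union M N)"
    proof (intro allI impI)
      fix J assume J: "J \<subseteq> I" "finite J"
      have fM: "finite (J \<inter> gnd M)" "finite (J \<inter> gnd N)" using J(2) by simp_all
      have s1: "J \<inter> gnd M \<subseteq> I \<inter> gnd M" "J \<inter> gnd N \<subseteq> I \<inter> gnd N" using J(1) by auto
      have "J \<inter> gnd M \<in> indep M" using IM[rule_format, OF s1(1) fM(1)] .
      moreover have "J \<inter> gnd N \<in> indep N" using IN[rule_format, OF s1(2) fM(2)] .
      moreover have "J \<subseteq> gnd M \<union> gnd N" using I1 J(1) by (rule_tac order_trans)
      ultimately show "J \<in> indep (matroid_union M N)" using iu[of J] by simp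
    qed
    thus "I \<in> indep (finitarization (matroid_union M N))"
      unfolding fin_mem g using I1 by blast
  qed
qed

lemma fin_sub: "\<forall>I\<in>indep (finitarization M). I \<subseteq> gnd M"
  unfolding finitarization_def by auto

lemma exists_fin_base:
  assumes "is_matroid N" "B \<in> indep N"
  shows "\<exists>F. base (finitarization N) F \<and> B \<subseteq> F"
proof -
  have sN: "\<forall>A\<in>indep N. A \<subseteq> gnd N" and dN: "\<forall>A B. B \<in> indep N \<longrightarrow> A \<subseteq> B \<longrightarrow> A \<in> indep N"
    using assms(1) unfolding is_matroid_def by auto
  define A where "A = {I. I \<in> indep (finitarization N) \<and> B \<subseteq> I}"
  have "B \<subseteq> gnd N" using sN assms(2) by blast
  moreover have "\<forall>J. J \<subseteq> B \<longrightarrow> finite J \<longrightarrow> J \<in> indep N" using dN assms(2) by blast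
  ultimately have "B \<in> indep (finitarization N)" unfolding fin_mem by blast
  hence BA: "B \<in> A" unfolding A_def by blast
  have "\<forall>C\<in>chains A. \<exists>U\<in>A. \<forall>X\<in>C. X \<subseteq> U"
  proof
    fix C assume C: "C \<in> chains A"
    show "\<exists>U\<in>A. \<forall>X\<in>C. X \<subseteq> U"
    proof (cases "C = {}")
      case True thus ?thesis using BA by blast
    next
      case False
      have CA: "C \<subseteq> A" using C unfolding chains_def chain_subset_def by blast
      have CI: "\<And>X. X \<in> C \<Longrightarrow> X \<subseteq> gnd N \<and> (\<forall>J. J \<subseteq> X \<longrightarrow> finite J \<longrightarrow> J \<in> indep N) \<and> B \<subseteq> X"
      proof -
        fix X assume "X \<in> C"
        hence "X \<in> A" using CA by blast
        thus "X \<subseteq> gnd N \<and> (\<forall>J. J \<subseteq> X \<longrightarrow> finite J \<longrightarrow> J \<in> indep N) \<and> B \<subseteq> X"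
          unfolding A_def fin_mem by blast
      qed
      have "\<Union>C \<in> A"
      proof -
        have "\<Union>C \<subseteq> gnd N" using CI by blast
        moreover have "B \<subseteq> \<Union>C" using False CI by blast
        moreover have "\<forall>J. J \<subseteq> \<Union>C \<longrightarrow> finite J \<longrightarrow> J \<in> indep N"
        proof (intro allI impI)
          fix J assume J: "J \<subseteq> \<Union>C" "finite J"
          have sc: "subset.chain A C" using C unfolding chains_alt_def by blast
          obtain X where X: "X \<in> C" "J \<subseteq> X"
            using finite_subset_Union_chain[OF J(2) J(1) False sc] by blast
          thus "J \<in> indep N" using CI[OF X(1)] J(2) by blast
        qed
        ultimately show ?thesis unfolding A_def fin_mem by blast
      qed
      thus ?thesis by blast
    qed
  qed
  then obtain F where F: "F \<in> A" "\<forall>X\<in>A. F \<subseteq> X \<longrightarrow> X = F" using Zorn_Lemma2 by blast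
  have FB: "B \<subseteq> F" and Fi: "F \<in> indep (finitarization N)" using F(1) unfolding A_def by blast+
  have "base (finitarization N) F" unfolding base_def maximal_in_def
  proof (intro conjI ballI impI)
    show "F \<in> indep (finitarization N)" by (rule Fi)
    fix T assume "T \<in> indep (finitarization N)" "F \<subseteq> T"
    moreover hence "T \<in> A" using FB unfolding A_def by blast
    ultimately show "T = F" using F(2) by blast
  qed
  thus ?thesis using FB by blast
qed

lemma mat_parts:
  assumes "is_matroid M"
  shows "\<forall>A\<in>indep M. A \<subseteq> gnd M"
    and "{} \<in> indep M"
    and "\<forall>A B. B \<in> indep M \<longrightarrow> A \<subseteq> B \<longrightarrow> A \<in> indep M"
    and "\<forall>A B. base M B \<longrightarrow> A \<in> indep M \<longrightarrow> \<not> base M A \<longrightarrow>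
        (\<exists>b\<in>B - A. insert b A \<in> indep M)"
    and "\<forall>A X. A \<in> indep M \<longrightarrow> A \<subseteq> X \<longrightarrow> X \<subseteq> gnd M \<longrightarrow>
        (\<exists>S. maximal_in {S'. S' \<in> indep M \<and> A \<subseteq> S' \<and> S' \<subseteq> X} S)"
proof -
  note h = assms[unfolded is_matroid_def]
  show "\<forall>A\<in>indep M. A \<subseteq> gnd M" using h by (rule conjunct1)
  show "{} \<in> indep M" using h[THEN conjunct2] by (rule conjunct1)
  show "\<forall>A B. B \<in> indep M \<longrightarrow> A \<subseteq> B \<longrightarrow> A \<in> indep M" using h[THEN conjunct2, THEN conjunct2] by (rule conjunct1)
  show "\<forall>A B. base M B \<longrightarrow> A \<in> indep M \<longrightarrow> \<not> base M A \<longrightarrow>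
        (\<exists>b\<in>B - A. insert b A \<in> indep M)" using h[THEN conjunct2, THEN conjunct2, THEN conjunct2] by (rule conjunct1)
  show "\<forall>A X. A \<in> indep M \<longrightarrow> A \<subseteq> X \<longrightarrow> X \<subseteq> gnd M \<longrightarrow>
        (\<exists>S. maximal_in {S'. S' \<in> indep M \<and> A \<subseteq> S' \<and> S' \<subseteq> X} S)"
    using h[THEN conjunct2, THEN conjunct2, THEN conjunct2] by (rule conjunct2)
qed

lemma base_U:
  assumes "is_matroid M" "is_matroid N" "gnd M \<inter> gnd N = {}"
  shows "base (matroid_union M N) B \<longleftrightarrow> B \<subseteq> gnd M \<union> gnd N \<and> base M (B \<inter> gnd M) \<and> base N (B \<inter> gnd N)"
  unfolding base_def
  by (rule max_sum[OF assms(3) mat_parts(1)[OF assms(1)] mat_parts(1)[OF assms(2)] indep_U[OF assms]])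

lemma base_finU:
  assumes "is_matroid M" "is_matroid N" "gnd M \<inter> gnd N = {}"
  shows "base (finitarization (matroid_union M N)) B \<longleftrightarrow> B \<subseteq> gnd M \<union> gnd N \<and>
     base (finitarization M) (B \<inter> gnd M) \<and> base (finitarization N) (B \<inter> gnd N)"
  unfolding base_def
  by (rule max_sum[OF assms(3) fin_sub fin_sub fin_U[OF assms]])

theorem theorem3p4p6:
  fixes M N :: "'a matroid"
  assumes "is_matroid M" and "nearly_finitary M"
    and "\<forall>k. \<not> k_nearly_finitary k M"
    and "is_matroid N" and "nearly_finitary N"
    and "gnd M \<inter> gnd N = {}"
  shows "is_matroid (matroid_union M N) \<and> nearly_finitary (matroid_union M N)
    \<and> (\<forall>k. \<not> k_nearly_finitary k (matroid_union M N))"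
proof -
  let ?U = "matroid_union M N"
  have mM: "is_matroid M" and mN: "is_matroid N" and d: "gnd M \<inter> gnd N = {}" using assms by auto
  have iu: "\<And>I. I \<in> indep ?U \<longleftrightarrow> I \<subseteq> gnd M \<union> gnd N \<and> I \<inter> gnd M \<in> indep M \<and> I \<inter> gnd N \<in> indep N"
    using indep_U[OF mM mN d] by blast
  have bu: "\<And>B. base ?U B \<longleftrightarrow> B \<subseteq> gnd M \<union> gnd N \<and> base M (B \<inter> gnd M) \<and> base N (B \<inter> gnd N)"
    by (rule base_U[OF mM mN d])
  have bf: "\<And>B. base (finitarization ?U) B \<longleftrightarrow> B \<subseteq> gnd M \<union> gnd N \<and>
     base (finitarization M) (B \<inter> gnd M) \<and> base (finitarization N) (B \<inter> gnd N)"
    by (rule base_finU[OF mM mN d])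
  have g: "gnd ?U = gnd M \<union> gnd N" unfolding matroid_union_def by simp
  note M1 = mat_parts[OF mM] and N1 = mat_parts[OF mN]
  have m1: "\<forall>A\<in>indep ?U. A \<subseteq> gnd ?U" using iu g by blast
  have m2: "{} \<in> indep ?U" using iu M1(2) N1(2) by simp
  have m3: "\<forall>A B. B \<in> indep ?U \<longrightarrow> A \<subseteq> B \<longrightarrow> A \<in> indep ?U"
  proof (intro allI impI)
    fix A B assume B: "B \<in> indep ?U" and AB: "A \<subseteq> B"
    have "B \<subseteq> gnd M \<union> gnd N" "B \<inter> gnd M \<in> indep M" "B \<inter> gnd N \<in> indep N" using B iu by blast+
    moreover have "A \<inter> gnd M \<subseteq> B \<inter> gnd M" "A \<inter> gnd N \<subseteq> B \<inter> gnd N" using AB by auto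
    ultimately have "A \<subseteq> gnd M \<union> gnd N" "A \<inter> gnd M \<in> indep M" "A \<inter> gnd N \<in> indep N"
      using AB M1(3) N1(3) by blast+
    thus "A \<in> indep ?U" using iu by blast
  qed
  have m4: "\<forall>A B. base ?U B \<longrightarrow> A \<in> indep ?U \<longrightarrow> \<not> base ?U A \<longrightarrow>
        (\<exists>b\<in>B - A. insert b A \<in> indep ?U)"
  proof (intro allI impI)
    fix A B assume B: "base ?U B" and A: "A \<in> indep ?U" and nA: "\<not> base ?U A"
    have Bs: "B \<subseteq> gnd M \<union> gnd N" "base M (B \<inter> gnd M)" "base N (B \<inter> gnd N)" using B bu by blast+
    have As: "A \<subseteq> gnd M \<union> gnd N" "A \<inter> gnd M \<in> indep M" "A \<inter> gnd N \<in> indep N" using A iu by blast+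
    have "\<not> base M (A \<inter> gnd M) \<or> \<not> base N (A \<inter> gnd N)" using nA bu As(1) by blast
    thus "\<exists>b\<in>B - A. insert b A \<in> indep ?U"
    proof
      assume "\<not> base M (A \<inter> gnd M)"
      then obtain b where b: "b \<in> B \<inter> gnd M - A \<inter> gnd M" "insert b (A \<inter> gnd M) \<in> indep M"
        using M1(4) Bs(2) As(2) by blast
      have "insert b A \<inter> gnd M = insert b (A \<inter> gnd M)" "insert b A \<inter> gnd N = A \<inter> gnd N"
        using b(1) d by auto
      moreover have "insert b A \<subseteq> gnd M \<union> gnd N" using b(1) As(1) by blast
      ultimately have "insert b A \<in> indep ?U" using iu b(2) As(3) by simp
      moreover have "b \<in> B - A" using b(1) by blast
      ultimately show ?thesis by blast
    next
      assume "\<not> base N (A \<inter> gnd N)"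
      then obtain b where b: "b \<in> B \<inter> gnd N - A \<inter> gnd N" "insert b (A \<inter> gnd N) \<in> indep N"
        using N1(4) Bs(3) As(3) by blast
      have "insert b A \<inter> gnd N = insert b (A \<inter> gnd N)" "insert b A \<inter> gnd M = A \<inter> gnd M"
        using b(1) d by auto
      moreover have "insert b A \<subseteq> gnd M \<union> gnd N" using b(1) As(1) by blast
      ultimately have "insert b A \<in> indep ?U" using iu b(2) As(2) by simp
      moreover have "b \<in> B - A" using b(1) by blast
      ultimately show ?thesis by blast
    qed
  qed
  have m5: "\<forall>A X. A \<in> indep ?U \<longrightarrow> A \<subseteq> X \<longrightarrow> X \<subseteq> gnd ?U \<longrightarrow>
        (\<exists>S. maximal_in {S'. S' \<in> indep ?U \<and> A \<subseteq> S' \<and> S' \<subseteq> X} S)"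
  proof (intro allI impI)
    fix A X assume A: "A \<in> indep ?U" and AX: "A \<subseteq> X" and X: "X \<subseteq> gnd ?U"
    have As: "A \<subseteq> gnd M \<union> gnd N" "A \<inter> gnd M \<in> indep M" "A \<inter> gnd N \<in> indep N" using A iu by blast+
    have XU: "X \<subseteq> gnd M \<union> gnd N" using X g by simp
    define P where "P = {S'. S' \<in> indep M \<and> A \<inter> gnd M \<subseteq> S' \<and> S' \<subseteq> X \<inter> gnd M}"
    define Q where "Q = {S'. S' \<in> indep N \<and> A \<inter> gnd N \<subseteq> S' \<and> S' \<subseteq> X \<inter> gnd N}"
    define R where "R = {S'. S' \<in> indep ?U \<and> A \<subseteq> S' \<and> S' \<subseteq> X}"
    have "A \<inter> gnd M \<subseteq> X \<inter> gnd M" "X \<inter> gnd M \<subseteq> gnd M" using AX by auto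
    then obtain S1 where S1: "maximal_in P S1" using M1(5) As(2) unfolding P_def by blast
    have "A \<inter> gnd N \<subseteq> X \<inter> gnd N" "X \<inter> gnd N \<subseteq> gnd N" using AX by auto
    then obtain S2 where S2: "maximal_in Q S2" using N1(5) As(3) unfolding Q_def by blast
    have pP: "\<forall>I\<in>P. I \<subseteq> gnd M" unfolding P_def by blast
    have qQ: "\<forall>I\<in>Q. I \<subseteq> gnd N" unfolding Q_def by blast
    have rR: "R = {I. I \<subseteq> gnd M \<union> gnd N \<and> I \<inter> gnd M \<in> P \<and> I \<inter> gnd N \<in> Q}"
    proof (intro set_eqI iffI)
      fix I assume "I \<in> R"
      hence I: "I \<in> indep ?U" "A \<subseteq> I" "I \<subseteq> X" unfolding R_def by blast+
      hence "I \<subseteq> gnd M \<union> gnd N" "I \<inter> gnd M \<in> indep M" "I \<inter> gnd N \<in> indep N" using iu by blast+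
      thus "I \<in> {I. I \<subseteq> gnd M \<union> gnd N \<and> I \<inter> gnd M \<in> P \<and> I \<inter> gnd N \<in> Q}"
        using I(2,3) unfolding P_def Q_def by blast
    next
      fix I assume "I \<in> {I. I \<subseteq> gnd M \<union> gnd N \<and> I \<inter> gnd M \<in> P \<and> I \<inter> gnd N \<in> Q}"
      hence I: "I \<subseteq> gnd M \<union> gnd N" "I \<inter> gnd M \<in> P" "I \<inter> gnd N \<in> Q" by blast+
      have "I \<in> indep ?U" using iu I unfolding P_def Q_def by blast
      moreover have "A \<subseteq> I" using As(1) I unfolding P_def Q_def by blast
      moreover have "I \<subseteq> X" using I unfolding P_def Q_def by blast
      ultimately show "I \<in> R" unfolding R_def by blast
    qed
    have S1s: "S1 \<subseteq> gnd M" using S1 pP unfolding maximal_in_def by blast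
    have S2s: "S2 \<subseteq> gnd N" using S2 qQ unfolding maximal_in_def by blast
    have "(S1 \<union> S2) \<inter> gnd M = S1" "(S1 \<union> S2) \<inter> gnd N = S2" using S1s S2s d by auto
    moreover have "S1 \<union> S2 \<subseteq> gnd M \<union> gnd N" using S1s S2s by blast
    ultimately have "maximal_in R (S1 \<union> S2)"
      using max_sum[OF d pP qQ rR] S1 S2 by simp
    thus "\<exists>S. maximal_in {S'. S' \<in> indep ?U \<and> A \<subseteq> S' \<and> S' \<subseteq> X} S" unfolding R_def by blast
  qed
  have part1: "is_matroid ?U" unfolding is_matroid_def using m1 m2 m3 m4 m5 by blast
  have part2: "nearly_finitary ?U" unfolding nearly_finitary_def
  proof (intro allI impI)
    fix F B assume F: "base (finitarization ?U) F" and B: "base ?U B" and BF: "B \<subseteq> F"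
    have Fs: "F \<subseteq> gnd M \<union> gnd N" "base (finitarization M) (F \<inter> gnd M)" "base (finitarization N) (F \<inter> gnd N)"
      using F bf by blast+
    have Bs: "base M (B \<inter> gnd M)" "base N (B \<inter> gnd N)" using B bu by blast+
    have s: "B \<inter> gnd M \<subseteq> F \<inter> gnd M" "B \<inter> gnd N \<subseteq> F \<inter> gnd N" using BF by auto
    have f1: "finite (F \<inter> gnd M - B \<inter> gnd M)"
      using assms(2) Fs(2) Bs(1) s(1) unfolding nearly_finitary_def by blast
    have f2: "finite (F \<inter> gnd N - B \<inter> gnd N)"
      using assms(5) Fs(3) Bs(2) s(2) unfolding nearly_finitary_def by blast
    have "F - B \<subseteq> (F \<inter> gnd M - B \<inter> gnd M) \<union> (F \<inter> gnd N - B \<inter> gnd N)" using Fs(1) by blast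
    thus "finite (F - B)" using f1 f2 by (meson finite_Un finite_subset)
  qed
  have part3: "\<forall>k. \<not> k_nearly_finitary k ?U"
  proof
    fix k
    have "\<not> k_nearly_finitary k M" using assms(3) by blast
    then obtain F B where F: "base (finitarization M) F" and B: "base M B" and BF: "B \<subseteq> F"
      and nk: "\<not> (finite (F - B) \<and> card (F - B) \<le> k)" unfolding k_nearly_finitary_def by blast
    have "{} \<subseteq> gnd N" by simp
    then obtain B' where B'm: "maximal_in {S'. S' \<in> indep N \<and> {} \<subseteq> S' \<and> S' \<subseteq> gnd N} B'"
      using N1(5) N1(2) by blast
    have B': "base N B'" unfolding base_def maximal_in_def
    proof (intro conjI ballI impI)
      show "B' \<in> indep N" using B'm unfolding maximal_in_def by blast
      fix T assume "T \<in> indep N" "B' \<subseteq> T"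
      moreover hence "T \<subseteq> gnd N" using N1(1) by blast
      ultimately show "T = B'" using B'm unfolding maximal_in_def by blast
    qed
    have B'i: "B' \<in> indep N" using B' unfolding base_def maximal_in_def by blast
    obtain F' where F': "base (finitarization N) F'" "B' \<subseteq> F'" using exists_fin_base[OF mN B'i] by blast
    have Fi: "F \<in> indep (finitarization M)" using F unfolding base_def maximal_in_def by blast
    have F'i: "F' \<in> indep (finitarization N)" using F'(1) unfolding base_def maximal_in_def by blast
    have Fs: "F \<subseteq> gnd M" using Fi unfolding fin_mem by blast
    have F's: "F' \<subseteq> gnd N" using F'i unfolding fin_mem by blast
    have Bi: "B \<in> indep M" using B unfolding base_def maximal_in_def by blast
    have Bs: "B \<subseteq> gnd M" using Bi M1(1) by blast
    have B's: "B' \<subseteq> gnd N" using B'i N1(1) by blast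
    have e1: "(B \<union> B') \<inter> gnd M = B" "(B \<union> B') \<inter> gnd N = B'" using Bs B's d by auto
    have e2: "(F \<union> F') \<inter> gnd M = F" "(F \<union> F') \<inter> gnd N = F'" using Fs F's d by auto
    have bU: "base ?U (B \<union> B')" unfolding bu e1 using B B' Bs B's by blast
    have fU: "base (finitarization ?U) (F \<union> F')" unfolding bf e2 using F F'(1) Fs F's by blast
    have sub: "B \<union> B' \<subseteq> F \<union> F'" using BF F'(2) by blast
    have inc: "F - B \<subseteq> (F \<union> F') - (B \<union> B')" using Bs B's Fs F's d by blast
    have "\<not> (finite ((F \<union> F') - (B \<union> B')) \<and> card ((F \<union> F') - (B \<union> B')) \<le> k)"
    proof
      assume h: "finite ((F \<union> F') - (B \<union> B')) \<and> card ((F \<union> F') - (B \<union> B')) \<le> k"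
      hence h1: "finite ((F \<union> F') - (B \<union> B'))" and h2: "card ((F \<union> F') - (B \<union> B')) \<le> k" by blast+
      have "finite (F - B)" using finite_subset[OF inc h1] .
      moreover have "card (F - B) \<le> k" using card_mono[OF h1 inc] h2 by linarith
      ultimately show False using nk by blast
    qed
    thus "\<not> k_nearly_finitary k ?U" unfolding k_nearly_finitary_def using bU fU sub by blast
  qed
  show ?thesis using part1 part2 part3 by blast
qed

end
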